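(* The free $\Gamma(Lev)$-algebra on one generator, $\Gamma(Lev,\mathbb F x)=\bigoplus_{n\ge1}(Lev(n)\otimes(\mathbb F x)^{\otimes n})^{\Sigma_n}$, is isomorphic as an $\mathbb F$-vector space to $\mathbb F[\mathrm{BHS}]$, the vector space spanned by the set of binary Huffman sequences.
   Context: $[n]=\{1,\dots,n\}$. $Lev$ is the linear operad spanned by the set operad $\mathscr L'$, where $\mathscr L'(n)$ ($n\ge1$) is the set of maps $h:[n]\to\mathbb N$ with $\sum_i2^{-h(i)}=1$, $\sigma\cdot h=h\circ\sigma^{-1}$, unit $1\mapsto0$ in $\mathscr L'(1)$, composition $\mu(h\otimes g_1\otimes\dots\otimes g_n)$ sending $m_1+\dots+m_{j-1}+t$ ($1\le t\le m_j$) to $h(j)+g_j(t)$; $Lev(0)=0$. $\Gamma(Lev)$ is Fresse's divided power monad $V\mapsto\bigoplus_n(Lev(n)\otimes V^{\otimes n})^{\Sigma_n}$, so $\Gamma(Lev,\mathbb F x)$ is the free $\Gamma(Lev)$-algebra on a one-dimensional space $\mathbb F x$. $\mathrm{BHS}=\bigsqcup_{n\ge1}\{u\in\mathbb N^{\mathbb N}:\sum_iu(i)=n,\ \sum_iu(i)/2^i=1\}$. *)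

theory Defs
  imports Complex_Main "HOL-Library.FuncSet" "HOL-Combinatorics.Permutations"
begin

definition Lprime :: "nat \<Rightarrow> (nat \<Rightarrow> nat) set" where
  "Lprime n = {h. h \<in> {1..n} \<rightarrow>\<^sub>E UNIV \<and> (\<Sum>i=1..n. (1/2::real) ^ (h i)) = 1}"

text \<open>Lev(n) = F[L'(n)]; (F x)^(x)n is one-dimensional (spanned by x^(x)n) with trivial
  Sigma_n-action, so an element is a finitely supported F-valued coefficient function
  on the basis {(n,h) | n >= 1, h in L'(n)} (coefficient of h (x) x^(x)n), and
  Sigma_n-invariance, for sigma.h = h o sigma^-1, means f(n, h o sigma) = f(n, h).\<close>
definition Gamma_Lev_x :: "(nat \<times> (nat \<Rightarrow> nat) \<Rightarrow> 'a::field) set" where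
  "Gamma_Lev_x = {f. finite {b. f b \<noteq> 0}
      \<and> (\<forall>n h. f (n, h) \<noteq> 0 \<longrightarrow> 1 \<le> n \<and> h \<in> Lprime n)
      \<and> (\<forall>n h \<sigma>. \<sigma> permutes {1..n} \<longrightarrow> f (n, h \<circ> \<sigma>) = f (n, h))}"

definition BHS :: "(nat \<Rightarrow> nat) set" where
  "BHS = {u. \<exists>n\<ge>1. finite {i. u i \<noteq> 0}
             \<and> (\<Sum>i\<in>{i. u i \<noteq> 0}. u i) = n
             \<and> (\<Sum>i\<in>{i. u i \<noteq> 0}. real (u i) / 2 ^ i) = 1}"

definition free_vs :: "'b set \<Rightarrow> ('b \<Rightarrow> 'a::field) set" where
  "free_vs S = {g. finite {s. g s \<noteq> 0} \<and> {s. g s \<noteq> 0} \<subseteq> S}"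

end

theory Submission
  imports Defs "HOL-Library.Multiset" "HOL-Combinatorics.Permutations"
begin

definition cnt :: "nat \<Rightarrow> (nat \<Rightarrow> nat) \<Rightarrow> nat multiset" where
  "cnt n h = image_mset h (mset_set {1..n})"

lemma supp_count: "{i. count M i \<noteq> 0} = set_mset M"
  by auto

lemma sum_count_size: "(\<Sum>i\<in>set_mset M. count M i) = size M"
  by (simp add: size_multiset_overloaded_eq)

lemma sum_over: "finite A \<Longrightarrow> set_mset M \<subseteq> A \<Longrightarrow>
   (\<Sum>x\<in>A. real (count M x) * f x) = (\<Sum>x\<in>#M. f x)"
proof (induction M)
  case empty then show ?case by simp
next
  case (add x M)
  have "(\<Sum>y\<in>A. real (count (add_mset x M) y) * f y)
     = (\<Sum>y\<in>A. real (count M y) * f y + (if y = x then f y else 0))"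
    by (intro sum.cong) (auto simp: distrib_right)
  also have "\<dots> = (\<Sum>y\<in>A. real (count M y) * f y) + f x"
    using add.prems by (simp add: sum.distrib)
  finally show ?case using add by simp
qed

lemma sum_count_w: "(\<Sum>i\<in>set_mset M. real (count M i) / 2 ^ i) = (\<Sum>i\<in>#M. (1/2::real) ^ i)"
  using sum_over[of "set_mset M" M "\<lambda>i. (1/2::real)^i"] by (simp add: power_one_over)

lemma size_cnt[simp]: "size (cnt n h) = n"
  by (simp add: cnt_def)

lemma sum_cnt: "(\<Sum>i\<in>#cnt n h. (1/2::real) ^ i) = (\<Sum>j=1..n. (1/2::real) ^ (h j))"
  by (simp add: cnt_def sum_unfold_sum_mset image_mset.compositionality o_def)

lemma Lprime_iff: "h \<in> Lprime n \<longleftrightarrow> h \<in> {1..n} \<rightarrow>\<^sub>E UNIV \<and> (\<Sum>i\<in>#cnt n h. (1/2::real) ^ i) = 1"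
  by (simp add: Lprime_def sum_cnt)

lemma BHS_iff: "u \<in> BHS \<longleftrightarrow> (\<exists>M. u = count M \<and> size M \<ge> 1 \<and> (\<Sum>i\<in>#M. (1/2::real) ^ i) = 1)"
proof
  assume "u \<in> BHS"
  then obtain n where n: "n \<ge> 1" "finite {i. u i \<noteq> 0}" "(\<Sum>i\<in>{i. u i \<noteq> 0}. u i) = n"
     "(\<Sum>i\<in>{i. u i \<noteq> 0}. real (u i) / 2 ^ i) = 1" unfolding BHS_def by blast
  define M where "M = Abs_multiset u"
  have u: "count M = u" unfolding M_def using n(2) by (intro count_Abs_multiset) simp
  show "\<exists>M. u = count M \<and> size M \<ge> 1 \<and> (\<Sum>i\<in>#M. (1/2::real) ^ i) = 1"
    using n u sum_count_size[of M] sum_count_w[of M] supp_count[of M] by (intro exI[of _ M]) auto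
next
  assume "\<exists>M. u = count M \<and> size M \<ge> 1 \<and> (\<Sum>i\<in>#M. (1/2::real) ^ i) = 1"
  then obtain M where M: "u = count M" "size M \<ge> 1" "(\<Sum>i\<in>#M. (1/2::real) ^ i) = 1" by blast
  show "u \<in> BHS" unfolding BHS_def
    using M sum_count_size[of M] sum_count_w[of M] supp_count[of M]
    by (intro CollectI exI[of _ "size M"]) simp
qed


lemma cnt_exists:
  assumes "size M = n"
  shows "\<exists>h. h \<in> {1..n} \<rightarrow>\<^sub>E UNIV \<and> cnt n h = M"
proof -
  obtain xs where xs: "mset xs = M" using ex_mset by blast
  have len: "length xs = n" using xs assms by auto
  define h where "h = (\<lambda>j. if j \<in> {1..n} then xs!(j-1) else undefined)"
  have "map h [1..<Suc n] = xs"
    by (rule nth_equalityI) (auto simp: h_def len simp del: upt_Suc)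
  hence "cnt n h = M"
    unfolding cnt_def using xs
    by (metis atLeastLessThanSuc_atLeastAtMost mset_map mset_upt)
  moreover have "h \<in> {1..n} \<rightarrow>\<^sub>E UNIV" by (auto simp: h_def)
  ultimately show ?thesis by blast
qed

lemma orbit:
  assumes "h \<in> {1..n} \<rightarrow>\<^sub>E UNIV" "h' \<in> {1..n} \<rightarrow>\<^sub>E UNIV" "cnt n h = cnt n h'"
  shows "\<exists>\<sigma>. \<sigma> permutes {1..n} \<and> h' = h \<circ> \<sigma>"
proof -
  have "image_mset h' (mset_set {1..n}) = image_mset h (mset_set {1..n})"
    using assms(3) by (simp add: cnt_def)
  then obtain p where p: "p permutes {1..n}" "\<forall>x\<in>{1..n}. h' x = h (p x)"
    by (rule image_mset_eq_implies_permutes[OF finite_atLeastAtMost]) blast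
  have "h' = h \<circ> p"
  proof
    fix x show "h' x = (h \<circ> p) x"
    proof (cases "x \<in> {1..n}")
      case True then show ?thesis using p by simp
    next
      case False
      then have "p x = x" using p(1) by (simp add: permutes_not_in)
      then show ?thesis using False assms(1,2) by (auto simp: PiE_def extensional_def)
    qed
  qed
  then show ?thesis using p by blast
qed

lemma perm_cnt: "\<sigma> permutes {1..n} \<Longrightarrow> cnt n (h \<circ> \<sigma>) = cnt n h"
  unfolding cnt_def
  by (rule permutes_implies_image_mset_eq[symmetric]) auto

lemma perm_Lprime: assumes "\<sigma> permutes {1..n}" "h \<in> Lprime n" shows "h \<circ> \<sigma> \<in> Lprime n"
proof -
  have "h \<circ> \<sigma> \<in> {1..n} \<rightarrow>\<^sub>E UNIV"
  proof -
    have "(h \<circ> \<sigma>) x = undefined" if "x \<notin> {1..n}" for x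
      using that assms by (auto simp: permutes_not_in Lprime_iff PiE_def extensional_def)
    then show ?thesis by (auto simp: PiE_def extensional_def)
  qed
  then show ?thesis using assms perm_cnt[OF assms(1)] by (simp add: Lprime_iff)
qed

lemma perm_Lprime_iff: assumes "\<sigma> permutes {1..n}" shows "h \<circ> \<sigma> \<in> Lprime n \<longleftrightarrow> h \<in> Lprime n"
proof
  assume "h \<circ> \<sigma> \<in> Lprime n"
  then have "(h \<circ> \<sigma>) \<circ> inv \<sigma> \<in> Lprime n" using perm_Lprime permutes_inv[OF assms] by blast
  then show "h \<in> Lprime n" by (simp add: comp_assoc permutes_inv_o(1)[OF assms])
qed (rule perm_Lprime[OF assms])


definition Pr :: "(nat \<Rightarrow> nat) \<Rightarrow> nat \<times> (nat \<Rightarrow> nat) \<Rightarrow> bool" where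
  "Pr u nh \<longleftrightarrow> 1 \<le> fst nh \<and> snd nh \<in> Lprime (fst nh) \<and> count (cnt (fst nh) (snd nh)) = u"

definition rep :: "(nat \<Rightarrow> nat) \<Rightarrow> nat \<times> (nat \<Rightarrow> nat)" where
  "rep u = (SOME nh. Pr u nh)"

lemma rep: assumes "u \<in> BHS" shows "Pr u (rep u)"
proof -
  obtain M where M: "u = count M" "size M \<ge> 1" "(\<Sum>i\<in>#M. (1/2::real) ^ i) = 1"
    using assms BHS_iff by blast
  obtain h where h: "h \<in> {1..size M} \<rightarrow>\<^sub>E UNIV" "cnt (size M) h = M"
    using cnt_exists by blast
  have "Pr u (size M, h)" using M h by (simp add: Pr_def Lprime_iff)
  then show ?thesis unfolding rep_def by (rule someI)
qed

lemma Pr_BHS: "Pr u nh \<Longrightarrow> u \<in> BHS"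
  unfolding BHS_iff Pr_def Lprime_iff by (intro exI[of _ "cnt (fst nh) (snd nh)"]) auto

lemma Pr_same:
  fixes f :: "nat \<times> (nat \<Rightarrow> nat) \<Rightarrow> 'a::field"
  assumes "f \<in> Gamma_Lev_x" "Pr u (n,h)" "Pr u (n',h')"
  shows "f (n,h) = f (n',h')"
proof -
  have c: "cnt n h = cnt n' h'" using assms(2,3) by (simp add: Pr_def multiset_eq_iff)
  then have nn: "n' = n" using size_cnt by metis
  have "h \<in> {1..n} \<rightarrow>\<^sub>E UNIV" "h' \<in> {1..n} \<rightarrow>\<^sub>E UNIV"
    using assms(2,3) nn by (auto simp: Pr_def Lprime_def)
  then obtain \<sigma> where "\<sigma> permutes {1..n}" "h' = h \<circ> \<sigma>" using orbit c nn by blast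
  then show ?thesis using assms(1) nn unfolding Gamma_Lev_x_def by auto
qed

theorem corollary6p8:
  shows "\<exists>\<phi>. bij_betw \<phi> (Gamma_Lev_x :: (nat \<times> (nat \<Rightarrow> nat) \<Rightarrow> 'a::field) set)
                        (free_vs BHS :: ((nat \<Rightarrow> nat) \<Rightarrow> 'a) set)
        \<and> (\<forall>f\<in>Gamma_Lev_x. \<forall>g\<in>Gamma_Lev_x. \<forall>c::'a.
              \<phi> (\<lambda>b. c * f b + g b) = (\<lambda>u. c * \<phi> f u + \<phi> g u))"
proof -
  define \<phi> :: "(nat \<times> (nat \<Rightarrow> nat) \<Rightarrow> 'a) \<Rightarrow> ((nat \<Rightarrow> nat) \<Rightarrow> 'a)" where
    "\<phi> = (\<lambda>f u. if u \<in> BHS then f (rep u) else 0)"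
  define \<psi> :: "((nat \<Rightarrow> nat) \<Rightarrow> 'a) \<Rightarrow> (nat \<times> (nat \<Rightarrow> nat) \<Rightarrow> 'a)" where
    "\<psi> = (\<lambda>g nh. if 1 \<le> fst nh \<and> snd nh \<in> Lprime (fst nh) then g (count (cnt (fst nh) (snd nh))) else 0)"
  have lin: "\<phi> (\<lambda>b. c * f b + g b) = (\<lambda>u. c * \<phi> f u + \<phi> g u)" for f g c
    by (auto simp: \<phi>_def)
  have img1: "\<phi> f \<in> free_vs BHS" if f: "f \<in> Gamma_Lev_x" for f
  proof -
    have "{u. \<phi> f u \<noteq> 0} \<subseteq> (\<lambda>nh. count (cnt (fst nh) (snd nh))) ` {b. f b \<noteq> 0}"
    proof
      fix u assume "u \<in> {u. \<phi> f u \<noteq> 0}"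
      then have u: "u \<in> BHS" "f (rep u) \<noteq> 0" by (auto simp: \<phi>_def split: if_splits)
      then show "u \<in> (\<lambda>nh. count (cnt (fst nh) (snd nh))) ` {b. f b \<noteq> 0}"
        using rep[OF u(1)] by (auto simp: Pr_def intro!: image_eqI[of _ _ "rep u"])
    qed
    moreover have "finite {b. f b \<noteq> 0}" using f by (simp add: Gamma_Lev_x_def)
    ultimately have "finite {u. \<phi> f u \<noteq> 0}" by (meson finite_imageI finite_subset)
    moreover have "{u. \<phi> f u \<noteq> 0} \<subseteq> BHS" by (auto simp: \<phi>_def split: if_splits)
    ultimately show ?thesis by (simp add: free_vs_def)
  qed
  have img2: "\<psi> g \<in> Gamma_Lev_x" if g: "g \<in> free_vs BHS" for g
  proof -
    define S where "S = count -` {u. g u \<noteq> 0}"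
    have S: "finite S" unfolding S_def
      using g by (intro finite_vimageI) (auto simp: free_vs_def inj_def count_inject)
    have "{b. \<psi> g b \<noteq> 0} \<subseteq> (\<Union>M\<in>S. Pair (size M) ` ({1..size M} \<rightarrow>\<^sub>E set_mset M))"
    proof
      fix b assume "b \<in> {b. \<psi> g b \<noteq> 0}"
      then obtain n h where b: "b = (n,h)" "h \<in> Lprime n" "g (count (cnt n h)) \<noteq> 0"
        by (cases b) (auto simp: \<psi>_def split: if_splits)
      have "h \<in> {1..n} \<rightarrow>\<^sub>E set_mset (cnt n h)"
        using b(2) by (auto simp: Lprime_def cnt_def PiE_def)
      then show "b \<in> (\<Union>M\<in>S. Pair (size M) ` ({1..size M} \<rightarrow>\<^sub>E set_mset M))"
        using b by (auto simp: S_def intro!: bexI[of _ "cnt n h"])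
    qed
    moreover have "finite (\<Union>M\<in>S. Pair (size M) ` ({1..size M} \<rightarrow>\<^sub>E set_mset M))"
      using S by (auto intro!: finite_PiE)
    ultimately have fin: "finite {b. \<psi> g b \<noteq> 0}" by (rule finite_subset)
    have inv: "\<psi> g (n, h \<circ> \<sigma>) = \<psi> g (n, h)" if "\<sigma> permutes {1..n}" for n h \<sigma>
      using that by (simp add: \<psi>_def perm_Lprime_iff perm_cnt)
    show ?thesis unfolding Gamma_Lev_x_def
      using fin inv by (auto simp: \<psi>_def split: if_splits)
  qed
  have left: "\<psi> (\<phi> f) = f" if f: "f \<in> Gamma_Lev_x" for f
  proof
    fix b show "\<psi> (\<phi> f) b = f b"
    proof (cases "1 \<le> fst b \<and> snd b \<in> Lprime (fst b)")
      case True
      define u where "u = count (cnt (fst b) (snd b))"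
      have Pb: "Pr u b" using True by (simp add: Pr_def u_def)
      have uB: "u \<in> BHS" using Pr_BHS[OF Pb] .
      have "f (rep u) = f b" using Pr_same[OF f, of u] rep[OF uB] Pb
        by (metis prod.collapse)
      then show ?thesis using True uB by (simp add: \<psi>_def \<phi>_def u_def)
    next
      case False
      then have "f b = 0" using f unfolding Gamma_Lev_x_def by (cases b) auto
      then show ?thesis using False by (auto simp add: \<psi>_def)
    qed
  qed
  have right: "\<phi> (\<psi> g) = g" if g: "g \<in> free_vs BHS" for g
  proof
    fix u show "\<phi> (\<psi> g) u = g u"
    proof (cases "u \<in> BHS")
      case True
      then show ?thesis using rep[OF True] by (simp add: \<phi>_def \<psi>_def Pr_def)
    next
      case False
      then have "g u = 0" using g by (auto simp: free_vs_def)
      then show ?thesis using False by (simp add: \<phi>_def)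
    qed
  qed
  have "bij_betw \<phi> (Gamma_Lev_x :: (nat \<times> (nat \<Rightarrow> nat) \<Rightarrow> 'a) set) (free_vs BHS)"
    by (rule bij_betw_byWitness[where f'=\<psi>]) (use left right img1 img2 in auto)
  then show ?thesis using lin by blast
qed

end
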